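(* Consider the caching network and the backhaul-eavesdropper scenario $S_1$ described in the context, with every user served by exactly one SBS ($\gamma_1=1$), and a placement $\mathbf{m}=(m_1,\dots,m_N)$ of integers $0\le m_j\le n$ filling the caches, i.e., $\sum_{j=1}^N m_j = nM$. If the network is secure in scenario $S_1$, then $$M > N - \frac{\eta}{Q},\qquad \text{where } \eta\triangleq\sum_{j=1}^N \frac{1}{p_j}.$$
   Context: A macro base station (MBS) has access to a library of $N$ files $F_1,\dots,F_N$; file $F_j$ is requested with probability $p_j>0$, $\sum_j p_j=1$. There are $N_{\text{SBS}}$ small-cell base stations (SBSs), each with a cache of size $M$ files. Each file is split into $n$ fragments and encoded with a code such that any $n$ distinct encoded packets of a file suffice to recover it, while fewer than $n$ distinct packets do not allow recovery. A placement $\mathbf{m}$ means each SBS stores $m_j$ encoded packets of $F_j$, with packets stored at different SBSs all distinct. A user is served by exactly $d$ SBSs with probability $\gamma_d$, $d=1,\dots,S$. A user requesting $F_j$ and served by $d$ SBSs receives $d m_j$ distinct packets from them, and the MBS sends the missing $n(1-\min(1,d m_j/n))$ new distinct packets over the backhaul. Scenario $S_1$: each SBS receives $Q>0$ requests during delivery, $Q p_j$ of them for $F_j$; an eavesdropper intercepts all packets sent over one MBS-to-SBS link, collecting $P_j=\sum_{d=1}^{S} Q\gamma_d p_j\, n(1-\min(1,d m_j/n))$ distinct packets of $F_j$. The network is secure in scenario $S_1$ if $P_j<n$ for all $j$. *)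

theory Defs
  imports Complex_Main
begin

text \<open>Number of distinct packets of file j collected by the eavesdropper on one
MBS-to-SBS link in scenario S1 (files indexed 1..N, d ranges over 1..S).\<close>
definition eaves_packets ::
  "real \<Rightarrow> nat \<Rightarrow> (nat \<Rightarrow> real) \<Rightarrow> (nat \<Rightarrow> real) \<Rightarrow> nat \<Rightarrow> (nat \<Rightarrow> nat) \<Rightarrow> nat \<Rightarrow> real" where
  "eaves_packets Q S \<gamma> p n m j =
     (\<Sum>d=1..S. Q * \<gamma> d * p j * real n * (1 - min 1 (real d * real (m j) / real n)))"

definition secure_S1 ::
  "nat \<Rightarrow> real \<Rightarrow> nat \<Rightarrow> (nat \<Rightarrow> real) \<Rightarrow> (nat \<Rightarrow> real) \<Rightarrow> nat \<Rightarrow> (nat \<Rightarrow> nat) \<Rightarrow> bool" where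
  "secure_S1 N Q S \<gamma> p n m = (\<forall>j\<in>{1..N}. eaves_packets Q S \<gamma> p n m j < real n)"

end

theory Submission
  imports Defs
begin

theorem corollary2:
  fixes N S n :: nat and M Q :: real and p \<gamma> :: "nat \<Rightarrow> real" and m :: "nat \<Rightarrow> nat"
  assumes p_pos: "\<forall>j\<in>{1..N}. p j > 0"
    and p_sum: "(\<Sum>j=1..N. p j) = 1"
    and n_pos: "n \<ge> 1"
    and S_pos: "S \<ge> 1"
    and \<gamma>_nonneg: "\<forall>d\<in>{1..S}. \<gamma> d \<ge> 0"
    and \<gamma>_sum: "(\<Sum>d=1..S. \<gamma> d) = 1"
    and \<gamma>_1: "\<gamma> 1 = 1"
    and Q_pos: "Q > 0"
    and m_le: "\<forall>j\<in>{1..N}. m j \<le> n"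
    and m_fill: "real (\<Sum>j=1..N. m j) = real n * M"
    and secure: "secure_S1 N Q S \<gamma> p n m"
  shows "M > real N - (\<Sum>j=1..N. 1 / p j) / Q"
proof -
  have split: "{1..S} = insert 1 {2..S}" using S_pos by auto
  have "(\<Sum>d=2..S. \<gamma> d) = 0" using \<gamma>_sum \<gamma>_1 unfolding split by simp
  hence g0: "\<forall>d\<in>{2..S}. \<gamma> d = 0"
    using sum_nonneg_eq_0_iff[of "{2..S}" \<gamma>] \<gamma>_nonneg by auto
  have N1: "N \<ge> 1" using p_sum by (cases N) auto
  have n0: "real n > 0" using n_pos by simp
  have key: "real n - real (m j) < real n / (Q * p j)" if j: "j \<in> {1..N}" for j
  proof -
    have mn: "real (m j) / real n \<le> 1" using m_le j n0 by (simp add: divide_simps)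
    have "eaves_packets Q S \<gamma> p n m j = Q * \<gamma> 1 * p j * real n * (1 - min 1 (real 1 * real (m j) / real n))
        + (\<Sum>d=2..S. Q * \<gamma> d * p j * real n * (1 - min 1 (real d * real (m j) / real n)))"
      unfolding eaves_packets_def split by simp
    also have "(\<Sum>d=2..S. Q * \<gamma> d * p j * real n * (1 - min 1 (real d * real (m j) / real n))) = 0"
      using g0 by simp
    also have "Q * \<gamma> 1 * p j * real n * (1 - min 1 (real 1 * real (m j) / real n)) = Q * p j * (real n - real (m j))"
      using mn n0 \<gamma>_1 by (simp add: min_def field_simps)
    finally have e: "eaves_packets Q S \<gamma> p n m j = Q * p j * (real n - real (m j))" by simp
    have "eaves_packets Q S \<gamma> p n m j < real n" using secure j unfolding secure_S1_def by blast
    hence h0: "Q * p j * (real n - real (m j)) < real n" using e by linarith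
    hence h: "(real n - real (m j)) * (Q * p j) < real n" by (simp only: mult.commute[of "real n - real (m j)"])
    have pos: "Q * p j > 0" using Q_pos p_pos j by simp
    show ?thesis using h pos_less_divide_eq[OF pos] by blast
  qed
  have "(\<Sum>j=1..N. real n - real (m j)) < (\<Sum>j=1..N. real n / (Q * p j))"
    using N1 key by (intro sum_strict_mono) auto
  also have "(\<Sum>j=1..N. real n / (Q * p j)) = real n / Q * (\<Sum>j=1..N. 1 / p j)"
    by (simp add: sum_distrib_left)
  finally have A: "(\<Sum>j=1..N. real n - real (m j)) < real n / Q * (\<Sum>j=1..N. 1 / p j)" .
  have "(\<Sum>j=1..N. real n - real (m j)) = real N * real n - (\<Sum>j=1..N. real (m j))"
    by (simp add: sum_subtractf)
  also have "(\<Sum>j=1..N. real (m j)) = real n * M" using m_fill by (simp only: of_nat_sum)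
  finally have "real n * (real N - M) < real n * ((\<Sum>j=1..N. 1 / p j) / Q)"
    using A by (simp add: algebra_simps)
  hence "real N - M < (\<Sum>j=1..N. 1 / p j) / Q" using n0 mult_less_cancel_left_pos by blast
  thus ?thesis by simp
qed

end
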